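(* For every integer $g\ge 1$ there exist polynomials $A_g,B_g\in\mathbb{C}[x]$ (with coefficients depending on $T$) such that $$w_{1,0}^{(g)}(x)=\frac{A_g(x)}{y(x)^{3g-2}}+\frac{B_g(x)}{y(x)^{3g-1}},$$ where $\deg A_g\le g-1$, $\deg B_g\le g$, $A_g(-x)=(-1)^{g-1}A_g(x)$, $B_g(-x)=(-1)^{g}B_g(x)$, and the coefficient of $x^{g-1}$ in $A_g$ is the negative of the coefficient of $x^{g}$ in $B_g$.
   Context: Fix $T>0$. Let $y(x)=\sqrt{x^2-4T}$ denote the branch analytic on $\mathbb{C}\setminus[-2\sqrt T,2\sqrt T]$ with $y(x)\sim x$ as $x\to\infty$; write $y_i=y(x_i)$. Let $\hbar$ be a parameter (in the application $\hbar=\sqrt{\kappa}-1/\sqrt{\kappa}$, where $\beta=2\kappa$ is the Dyson index of the Gaussian $\beta$-ensemble $\prod_{i<j}|\lambda_i-\lambda_j|^{2\kappa}e^{-\frac{N\kappa}{T}\sum_i\lambda_i^2/2}$). The functions $W_n^{(g)}(x_1,\dots,x_n)$, $n\ge1$, $g\ge0$ (the coefficients of the large-$N$ expansion of the connected correlators $\langle\sum_{i_1,\dots,i_n}\prod_k (x_k-\lambda_{i_k})^{-1}\rangle_c$ of that ensemble), are the symmetric functions determined recursively as follows: $W_1^{(0)}(x)=\tfrac12(x-y(x))$; by convention $W_n^{(-1)}=W_n^{(-2)}=0$; and for every $(n,g)$ with $n\ge1$, $g\ge0$, $(n,g)\neq(1,0)$, writing $I=(x_1,\dots,x_{n-1})$,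 $$y(x)W_n^{(g)}(x,I)=\hbar\,\partial_xW_n^{(g-1)}(x,I)+W_{n+1}^{(g-2)}(x,x,I)+{\sum_{J\subseteq I}}'\sum_{p=0}^{g}W_{|J|+1}^{(p)}(x,J)\,W_{n-|J|}^{(g-p)}(x,I\setminus J)+\sum_{i=1}^{n-1}\frac{\partial}{\partial x_i}\frac{W_{n-1}^{(g)}(x,I\setminus\{x_i\})-W_{n-1}^{(g)}(I)}{x-x_i},$$ where the primed double sum omits the two terms $(J=\emptyset,p=0)$ and $(J=I,p=g)$, and for $n=1$ the last sum is empty. These functions are rational in the $x_i$ and $y_i$, regular on the diagonals, and each $W_n^{(g)}$ is a polynomial in $\hbar$ of degree at most $g$ containing only powers $\hbar^j$ with $j\equiv g \pmod 2$. For $k\ge1$, $g\ge0$ and $0\le r\le g/2$, $w_{k,2r}^{(g)}(x)$ denotes the coefficient of $\hbar^{g-2r}$ in $W_k^{(g)}(x,\dots,x)$ (all $k$ arguments equal to $x$). Thus $w_{1,0}^{(g)}(x)$ is the coefficient of $\hbar^g$ in $W_1^{(g)}(x)$. *)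

theory Defs
  imports "HOL-Analysis.Analysis"
begin

text \<open>The branch of sqrt(x^2 - 4T) analytic off the cut [-2 sqrt T, 2 sqrt T]
  with y(x) ~ x at infinity (csqrt is the principal branch).\<close>
definition ycut :: "real \<Rightarrow> complex \<Rightarrow> complex" where
  "ycut T x = x * csqrt (1 - 4 * complex_of_real T / x ^ 2)"

definition cut :: "real \<Rightarrow> complex set" where
  "cut T = {complex_of_real t | t. - 2 * sqrt T \<le> t \<and> t \<le> 2 * sqrt T}"

text \<open>Wc T g j (x # I) is the coefficient of hbar^j in W_n^{(g)}(x, I), n = length (x # I),
  defined through the loop equation (valid at generic points: pairwise distinct, off the cut).
  Diagonal values W(x,x,I) are obtained as limits.\<close>
lemma Wc_len_nths:
  assumes "J \<subseteq> {..<length I}"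
  shows "length (nths I J) = card J"
proof -
  have "{i. i < length I \<and> i \<in> J} = J" using assms by auto
  then show ?thesis by (simp add: length_nths)
qed

lemma Wc_len_nths_compl:
  "length (nths I ({..<length I} - J)) = card ({..<length I} - J)"
proof -
  have "{i. i < length I \<and> i \<in> {..<length I} - J} = {..<length I} - J" by auto
  then show ?thesis by (simp add: length_nths)
qed

function Wc :: "real \<Rightarrow> nat \<Rightarrow> nat \<Rightarrow> complex list \<Rightarrow> complex" where
  "Wc T g j [] = 0"
| "Wc T g j (x # I) =
     (if g = 0 \<and> I = [] then (if j = 0 then (x - ycut T x) / 2 else 0)
      else
       ((if 1 \<le> g \<and> 1 \<le> j then deriv (\<lambda>z. Wc T (g - 1) (j - 1) (z # I)) x else 0)
        + (if 2 \<le> g then Lim (at x) (\<lambda>z. Wc T (g - 2) j (z # x # I)) else 0)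
        + (\<Sum>J\<in>Pow {..<length I}. \<Sum>p\<in>{..g}.
             if (J = {} \<and> p = 0) \<or> (J = {..<length I} \<and> p = g) then 0
             else (\<Sum>a\<in>{..j}. Wc T p a (x # nths I J) * Wc T (g - p) (j - a) (x # nths I ({..<length I} - J))))
        + (\<Sum>i<length I. deriv (\<lambda>t. (Wc T g j (x # nths I ({..<length I} - {i})) - Wc T g j (I[i := t])) / (x - t)) (I ! i)))
       / ycut T x)"
  by pat_completeness auto
termination
proof (relation "Wellfounded.measure (\<lambda>(T, g, j, xs). 2 * g + length xs)", goal_cases)
  case 1 then show ?case by simp
next
  case 2 then show ?case by simp
next
  case 3 then show ?case by simp
next
  case (4 T g j x I J p a)
  then have J: "J \<subseteq> {..<length I}" and p: "p \<le> g"
    and ex: "\<not> ((J = {} \<and> p = 0) \<or> (J = {..<length I} \<and> p = g))" by auto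
  have "card J \<le> length I" using J by (metis card_lessThan card_mono finite_lessThan)
  moreover have "card J = length I \<Longrightarrow> J = {..<length I}"
    using J by (metis card_lessThan card_subset_eq finite_lessThan)
  ultimately show ?case
    using p ex Wc_len_nths[OF J] by (cases "p = g") auto
next
  case (5 T g j x I J p a)
  then have J: "J \<subseteq> {..<length I}" and p: "p \<le> g"
    and ex: "\<not> ((J = {} \<and> p = 0) \<or> (J = {..<length I} \<and> p = g))" by auto
  have c: "card ({..<length I} - J) = length I - card J"
    using J by (simp add: card_Diff_subset finite_subset)
  have "J \<noteq> {} \<Longrightarrow> card J > 0" using J by (meson card_gt_0_iff finite_lessThan finite_subset)
  moreover have "card J \<le> length I" using J by (metis card_lessThan card_mono finite_lessThan)
  ultimately have "p = 0 \<Longrightarrow> length (nths I ({..<length I} - J)) < length I"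
    using ex c Wc_len_nths_compl[of I J] by auto
  moreover have "length (nths I ({..<length I} - J)) \<le> length I"
    using c Wc_len_nths_compl[of I J] by simp
  ultimately show ?case
    using p by (cases "p = 0") auto
next
  case (6 T g j x I i)
  then have "i < length I" by simp
  then have "card ({..<length I} - {i}) < length I" by simp
  then show ?case using Wc_len_nths_compl[of I "{i}"] by simp
next
  case 7 then show ?case by simp
qed

definition w10 :: "real \<Rightarrow> nat \<Rightarrow> complex \<Rightarrow> complex" where
  "w10 T g x = Wc T g g [x]"

end

theory Submission
  imports Defs
begin

declare Wc.simps(2)[simp del]

lemma Lim_zero_at: "Lim (at (x::complex)) (\<lambda>z. 0::complex) = 0"
  by (rule tendsto_Lim) (auto simp: trivial_limit_at)

lemma Wc_vanish: "j > g \<Longrightarrow> Wc T g j L = 0"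
proof (induction T g j L rule: Wc.induct)
  case (1 T g j)
  then show ?case by simp
next
  case (2 T g j x I)
  show ?case
  proof (cases "g = 0 \<and> I = []")
    case True then show ?thesis using 2(7) by (subst Wc.simps(2)) simp
  next
    case False
    have d: "(if 1 \<le> g \<and> 1 \<le> j then deriv (\<lambda>z. Wc T (g - 1) (j - 1) (z # I)) x else 0) = 0"
      using 2(1)[OF False] 2(7) by auto
    have l: "(if 2 \<le> g then Lim (at x) (\<lambda>z. Wc T (g - 2) j (z # x # I)) else 0) = 0"
      using 2(2)[OF False] 2(7) by (auto simp: Lim_zero_at)
    have s: "(\<Sum>J\<in>Pow {..<length I}. \<Sum>p\<le>g.
                 if J = {} \<and> p = 0 \<or> J = {..<length I} \<and> p = g then 0
                 else \<Sum>a\<le>j. Wc T p a (x # nths I J) *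
                         Wc T (g - p) (j - a) (x # nths I ({..<length I} - J))) = 0"
    proof (intro sum.neutral ballI)
      fix J p assume J: "J \<in> Pow {..<length I}" and p: "p \<in> {..g}"
      show "(if J = {} \<and> p = 0 \<or> J = {..<length I} \<and> p = g then 0
                 else \<Sum>a\<le>j. Wc T p a (x # nths I J) *
                         Wc T (g - p) (j - a) (x # nths I ({..<length I} - J))) = 0"
      proof (cases "J = {} \<and> p = 0 \<or> J = {..<length I} \<and> p = g")
        case True then show ?thesis by simp
      next
        case nt: False
        have "Wc T p a (x # nths I J) * Wc T (g - p) (j - a) (x # nths I ({..<length I} - J)) = 0"
          if a: "a \<in> {..j}" for a
        proof (cases "a > p")
          case True then show ?thesis using 2(3)[OF False J p nt a] by simp
        next
          case f: False
          then have "j - a > g - p" using 2(7) a p by auto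
          then show ?thesis using 2(4)[OF False J p nt a] by simp
        qed
        then show ?thesis using nt by (simp add: sum.neutral)
      qed
    qed
    have t: "(\<Sum>i<length I. deriv (\<lambda>t. (Wc T g j (x # nths I ({..<length I} - {i})) -
                      Wc T g j (I[i := t])) / (x - t)) (I ! i)) = 0"
      using 2(5)[OF False] 2(6)[OF False] 2(7) by simp
    show ?thesis using False d l s t by (subst Wc.simps(2)) (simp only: if_False add_0_right add_0_left div_0)
  qed
qed

lemma w10_rec:
  assumes "g \<ge> 1"
  shows "w10 T g x = (deriv (\<lambda>z. w10 T (g - 1) z) x
          + (\<Sum>p\<in>{1..<g}. w10 T p x * w10 T (g - p) x)) / ycut T x"
proof -
  have l: "(if 2 \<le> g then Lim (at x) (\<lambda>z. Wc T (g - 2) g (z # x # [])) else 0) = 0"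
    using Wc_vanish[of "g-2" g T] by (auto simp: Lim_zero_at)
  have inner: "(\<Sum>a\<le>g. Wc T p a [x] * Wc T (g - p) (g - a) [x]) = w10 T p x * w10 T (g - p) x"
    if p: "p \<le> g" for p
  proof -
    have "(\<Sum>a\<le>g. Wc T p a [x] * Wc T (g - p) (g - a) [x]) =
          (\<Sum>a\<le>g. if a = p then Wc T p a [x] * Wc T (g - p) (g - a) [x] else 0)"
    proof (rule sum.cong[OF refl])
      fix a assume "a \<in> {..g}"
      show "Wc T p a [x] * Wc T (g - p) (g - a) [x] =
          (if a = p then Wc T p a [x] * Wc T (g - p) (g - a) [x] else 0)"
      proof (cases "a = p")
        case False
        then have "a > p \<or> g - a > g - p" using p \<open>a \<in> {..g}\<close> by auto
        then show ?thesis using Wc_vanish[of p a T "[x]"] Wc_vanish[of "g-p" "g-a" T "[x]"] by auto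
      qed simp
    qed
    also have "\<dots> = w10 T p x * w10 T (g - p) x" using p by (simp add: w10_def)
    finally show ?thesis .
  qed
  have s: "(\<Sum>p\<le>g. if p = 0 \<or> p = g then 0
             else \<Sum>a\<le>g. Wc T p a [x] * Wc T (g - p) (g - a) [x])
         = (\<Sum>p\<in>{1..<g}. w10 T p x * w10 T (g - p) x)"
  proof -
    have "(\<Sum>p\<le>g. if p = 0 \<or> p = g then 0
             else \<Sum>a\<le>g. Wc T p a [x] * Wc T (g - p) (g - a) [x])
        = (\<Sum>p\<le>g. if p \<in> {1..<g} then w10 T p x * w10 T (g - p) x else 0)"
      by (rule sum.cong[OF refl]) (auto simp: inner)
    also have "\<dots> = (\<Sum>p\<in>{1..<g}. w10 T p x * w10 T (g - p) x)"
      by (subst sum.inter_restrict[symmetric]) (auto intro!: sum.cong)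
    finally show ?thesis .
  qed
  have pw0: "\<And>F::nat set \<Rightarrow> complex. sum F (Pow {..<0}) = F {}" by simp
  have "w10 T g x = Wc T g g [x]" by (simp add: w10_def)
  also have "\<dots> = (deriv (\<lambda>z. Wc T (g - 1) (g - 1) [z]) x + 0 +
     (\<Sum>p\<le>g. if p = 0 \<or> p = g then 0
             else \<Sum>a\<le>g. Wc T p a [x] * Wc T (g - p) (g - a) [x]) + 0) / ycut T x"
    using assms l by (subst Wc.simps(2)) (simp only: list.size pw0 nths_nil, simp)
  also have "\<dots> = (deriv (\<lambda>z. w10 T (g - 1) z) x
          + (\<Sum>p\<in>{1..<g}. w10 T p x * w10 T (g - p) x)) / ycut T x"
    by (simp add: s w10_def)
  finally show ?thesis .
qed


lemma cut_eq: "cut T = complex_of_real ` {- 2 * sqrt T .. 2 * sqrt T}"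
  unfolding cut_def by auto

lemma closed_cut: "closed (cut T)"
  unfolding cut_eq
  by (intro compact_imp_closed compact_continuous_image continuous_intros) auto

lemma real_in_cut: "\<bar>a\<bar> \<le> 2 * sqrt T \<Longrightarrow> complex_of_real a \<in> cut T"
  unfolding cut_def by auto

lemma notin_cut_nz: "T > 0 \<Longrightarrow> x \<notin> cut T \<Longrightarrow> x \<noteq> 0"
  using real_in_cut[of 0 T] by auto

lemma ycut_sq: "x \<noteq> 0 \<Longrightarrow> ycut T x ^ 2 = x ^ 2 - 4 * complex_of_real T"
  unfolding ycut_def by (simp add: power_mult_distrib field_simps)

lemma ycut_nz:
  assumes "T > 0" "x \<notin> cut T" shows "ycut T x \<noteq> 0"
proof
  assume "ycut T x = 0"
  then have "x^2 = 4 * complex_of_real T" using ycut_sq[OF notin_cut_nz[OF assms], of T] by simp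
  also have "\<dots> = (complex_of_real (2 * sqrt T))^2" using assms
    by (simp add: power_mult_distrib flip: of_real_power)
  finally have "x = complex_of_real (2 * sqrt T) \<or> x = - complex_of_real (2 * sqrt T)"
    using power2_eq_iff by blast
  then show False using assms real_in_cut[of "2 * sqrt T" T] real_in_cut[of "-2 * sqrt T" T]
    by auto
qed

lemma sq_real_pos_imp_real:
  fixes x :: complex
  assumes "x^2 = complex_of_real s" "s > 0"
  shows "x = complex_of_real (Re x) \<and> (Re x)^2 = s"
proof -
  have im: "2 * Re x * Im x = 0"
  proof -
    have "Im (x^2) = 0" using assms(1) by simp
    then show ?thesis by (simp add: Im_power2)
  qed
  have re: "(Re x)^2 - (Im x)^2 = s"
  proof -
    have "Re (x^2) = s" using assms(1) by simp
    then show ?thesis by (simp add: Re_power2)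
  qed
  have "Im x = 0"
  proof (rule ccontr)
    assume "Im x \<noteq> 0"
    then have "Re x = 0" using im by simp
    then have "s + (Im x)^2 = 0" using re by simp
    moreover have "(Im x)^2 \<ge> 0" by simp
    ultimately show False using assms(2) by linarith
  qed
  then show ?thesis using re by (simp add: complex_eq_iff)
qed

lemma notin_nonpos:
  assumes T: "T > 0" and x: "x \<notin> cut T"
  shows "1 - 4 * complex_of_real T / x ^ 2 \<notin> \<real>\<^sub>\<le>\<^sub>0"
proof
  assume "1 - 4 * complex_of_real T / x ^ 2 \<in> \<real>\<^sub>\<le>\<^sub>0"
  then obtain r where r: "r \<le> 0" "1 - 4 * complex_of_real T / x ^ 2 = complex_of_real r"
    by (metis nonpos_Reals_cases)
  have x0: "x \<noteq> 0" using notin_cut_nz[OF T x] .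
  have r1: "complex_of_real (1 - r) \<noteq> 0" using r(1) by simp
  have e1: "4 * complex_of_real T / x ^ 2 = complex_of_real (1 - r)"
  proof -
    have "4 * complex_of_real T / x ^ 2 = 1 - (1 - 4 * complex_of_real T / x ^ 2)" by simp
    also have "\<dots> = 1 - complex_of_real r" by (simp only: r(2))
    finally show ?thesis by simp
  qed
  have "x^2 = complex_of_real (4 * T) / complex_of_real (1 - r)"
    using e1 x0 r1 by (simp add: field_simps)
  then have "x^2 = complex_of_real (4 * T / (1 - r))" by (simp only: of_real_divide)
  moreover have pos: "4 * T / (1 - r) > 0" using T r by simp
  ultimately have xr: "x = complex_of_real (Re x)" and s: "(Re x)^2 = 4 * T / (1 - r)"
    using sq_real_pos_imp_real by blast+
  have "4 * T / (1 - r) \<le> 4 * T / 1" using T r by (intro divide_left_mono) auto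
  then have "(Re x)^2 \<le> (2 * sqrt T)^2" using s T by (simp add: power_mult_distrib)
  then have "\<bar>Re x\<bar> \<le> 2 * sqrt T" using T power2_le_imp_le[of "\<bar>Re x\<bar>" "2 * sqrt T"] by simp
  then have "x \<in> cut T" using real_in_cut xr by metis
  then show False using x by simp
qed

lemma aux_alg:
  fixes c x t :: complex
  assumes "c * c = 1 - 4 * t / x ^ 2" "c \<noteq> 0" "x \<noteq> 0"
  shows "c + x * ((8 * t / x^3) / (2 * c)) = x / (x * c)"
proof -
  have "c * c * x^2 = x^2 - 4 * t" using assms by (simp add: field_simps)
  then show ?thesis using assms(2,3)
    by (simp add: field_simps power3_eq_cube power2_eq_square)
qed

lemma ycut_deriv:
  assumes T: "T > 0" and x: "x \<notin> cut T"
  shows "(ycut T has_field_derivative x / ycut T x) (at x)"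
proof -
  let ?w = "1 - 4 * complex_of_real T / x ^ 2"
  have x0: "x \<noteq> 0" using notin_cut_nz[OF T x] .
  have nn: "?w \<notin> \<real>\<^sub>\<le>\<^sub>0" using notin_nonpos[OF T x] .
  then have w0: "csqrt ?w \<noteq> 0" by auto
  have d1: "((\<lambda>z. 1 - 4 * complex_of_real T / z ^ 2) has_field_derivative 8 * complex_of_real T / x^3) (at x)"
    using x0 by (auto intro!: derivative_eq_intros simp: field_simps power3_eq_cube power2_eq_square)
  note d2 = has_field_derivative_csqrt'[OF d1 nn]
  have "((\<lambda>z. z * csqrt (1 - 4 * complex_of_real T / z ^ 2)) has_field_derivative
     csqrt ?w + x * ((8 * complex_of_real T / x^3) / (2 * csqrt ?w))) (at x)"
    using DERIV_mult[OF DERIV_ident d2] by (simp add: mult.commute)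
  moreover have "csqrt ?w + x * ((8 * complex_of_real T / x^3) / (2 * csqrt ?w)) = x / ycut T x"
  proof -
    have sq: "csqrt ?w * csqrt ?w = ?w" using power2_csqrt[of ?w] by (simp add: power2_eq_square)
    show ?thesis unfolding ycut_def using aux_alg[OF sq w0 x0] .
  qed
  ultimately show ?thesis unfolding ycut_def[abs_def] by simp
qed


definition pX :: "complex poly" where "pX = [:0, 1:]"

definition par :: "complex \<Rightarrow> complex poly \<Rightarrow> bool" where
  "par s P \<longleftrightarrow> (\<forall>x. poly P (- x) = s * poly P x)"

lemma poly_pX[simp]: "poly pX x = x" by (simp add: pX_def)

lemma par_mult: "par s P \<Longrightarrow> par t Q \<Longrightarrow> par (s * t) (P * Q)"
  by (simp add: par_def)
lemma par_add: "par s P \<Longrightarrow> par s Q \<Longrightarrow> par s (P + Q)"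
  by (simp add: par_def algebra_simps)
lemma par_diff: "par s P \<Longrightarrow> par s Q \<Longrightarrow> par s (P - Q)"
  by (simp add: par_def algebra_simps)
lemma par_sum: "(\<And>i. i \<in> S \<Longrightarrow> par s (f i)) \<Longrightarrow> par s (sum f S)"
  by (simp add: par_def poly_sum sum_distrib_left)
lemma par_const: "par 1 [:c:]" by (simp add: par_def)
lemma par_pX: "par (-1) pX" by (simp add: par_def)
lemma par_cong: "par s P \<Longrightarrow> s = t \<Longrightarrow> par t P" by simp

lemma par_pderiv:
  assumes "par s P" shows "par (- s) (pderiv P)"
proof -
  have "P \<circ>\<^sub>p [:0, -1:] = smult s P"
    using assms by (intro poly_eq_poly_eq_iff[THEN iffD1] ext) (simp add: par_def poly_pcompose)
  then have "pderiv (P \<circ>\<^sub>p [:0, -1:]) = smult s (pderiv P)" by (simp add: pderiv_smult)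
  then have e: "pderiv P \<circ>\<^sub>p [:0, -1:] * [:-1:] = smult s (pderiv P)"
    by (simp add: pderiv_pcompose pderiv_pCons)
  show ?thesis unfolding par_def
  proof
    fix x
    have "poly (pderiv P \<circ>\<^sub>p [:0, -1:] * [:-1:]) x = poly (smult s (pderiv P)) x" using e by simp
    then show "poly (pderiv P) (- x) = - s * poly (pderiv P) x"
      by (simp add: poly_pcompose) (metis minus_minus)
  qed
qed

lemma pX_mult: "pX * A = pCons 0 A"
  by (simp add: pX_def)

lemma deg_pX_mult: "degree (pX * A) \<le> degree A + 1"
  unfolding pX_mult using degree_pCons_le[of 0 A] by simp

lemma deg_Y2_pderiv:
  fixes Y2 :: "complex poly"
  assumes "degree Y2 \<le> 2"
  shows "degree (Y2 * pderiv A) \<le> degree A + 1"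
proof (cases "pderiv A = 0")
  case True then show ?thesis by simp
next
  case False
  then have "degree A \<ge> 1"
    by (metis degree_0 le_less_linear less_one pderiv_eq_0_iff)
  moreover have "degree (pderiv A) = degree A - 1" by (simp add: degree_pderiv)
  ultimately show ?thesis using degree_mult_le[of Y2 "pderiv A"] assms by linarith
qed

lemma deriv_quot_alg0:
  fixes y p q x u K :: complex
  assumes "y \<noteq> 0" "u \<noteq> 0"
  shows "(q * (u * y) - p * (K * (x / y * u))) / ((u * y) * (u * y))
     = q / (u * y) - K * x * p / (u * y * y * y)"
  using assms by (simp add: field_simps)

lemma deriv_quot_alg:
  fixes y p q x :: complex
  assumes y0: "y \<noteq> 0"
  shows "(q * y ^ k - p * (of_nat k * (x / y * y ^ (k - Suc 0)))) / (y ^ k * y ^ k)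
     = q / y ^ k - of_nat k * x * p / y ^ (k + 2)"
proof (cases k)
  case 0 then show ?thesis using y0 by simp
next
  case (Suc m)
  have e: "y ^ k = y ^ m * y" "k - Suc 0 = m" "y ^ (k + 2) = y ^ m * y * y * y"
    using Suc by (simp_all add: power_add power2_eq_square)
  have u0: "y ^ m \<noteq> 0" using y0 by simp
  show ?thesis unfolding e by (rule deriv_quot_alg0[OF y0 u0])
qed

lemma deriv_quot_pow:
  assumes T: "T > 0" and x: "x \<notin> cut T"
  shows "((\<lambda>z. poly P z / ycut T z ^ k) has_field_derivative
     (poly (pderiv P) x / ycut T x ^ k - of_nat k * x * poly P x / ycut T x ^ (k + 2))) (at x)"
proof -
  let ?y = "ycut T x"
  have y0: "?y \<noteq> 0" using ycut_nz[OF T x] .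
  have dy: "(ycut T has_field_derivative x / ?y) (at x)" using ycut_deriv[OF T x] .
  have dyk: "((\<lambda>z. ycut T z ^ k) has_field_derivative of_nat k * (x / ?y * ?y ^ (k - Suc 0))) (at x)"
    by (rule DERIV_power[OF dy])
  have yk: "?y ^ k \<noteq> 0" using y0 by simp
  have "((\<lambda>z. poly P z / ycut T z ^ k) has_field_derivative
     (poly (pderiv P) x * ?y ^ k - poly P x * (of_nat k * (x / ?y * ?y ^ (k - Suc 0)))) / (?y ^ k * ?y ^ k)) (at x)"
    by (rule DERIV_divide[OF poly_DERIV dyk yk])
  then show ?thesis by (simp only: deriv_quot_alg[OF y0])
qed

lemma pow_prod_alg0:
  fixes y a b c d u v :: complex
  assumes "y \<noteq> 0" "u \<noteq> 0" "v \<noteq> 0"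
  shows "u * v * (y * y) * ((a / u + b / (u * y)) * (c / v + d / (v * y)))
        = a * c * (y * y) + (a * d + b * c) * y + b * d"
  using assms by (simp add: field_simps)

lemma pow_prod_alg:
  fixes y a b c d :: complex
  assumes y0: "y \<noteq> 0"
  shows "y ^ (e1 + e2 + 2) * ((a / y ^ e1 + b / y ^ (e1 + 1)) * (c / y ^ e2 + d / y ^ (e2 + 1)))
        = a * c * y^2 + (a * d + b * c) * y + b * d"
proof -
  have e: "y ^ (e1 + e2 + 2) = y^e1 * y^e2 * (y * y)" "y ^ (e1 + 1) = y^e1 * y"
    "y ^ (e2 + 1) = y^e2 * y" "y^2 = y * y" by (simp_all add: power_add power2_eq_square)
  have "y^e1 \<noteq> 0" "y^e2 \<noteq> 0" using y0 by simp_all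
  then show ?thesis unfolding e by (rule pow_prod_alg0[OF y0])
qed

lemma pow_deriv_alg0:
  fixes y a b c d x u k k1 :: complex
  assumes "y \<noteq> 0" "u \<noteq> 0"
  shows "u * (y * y * y) * ((a / u - k * x * c / (u * (y * y))) + (b / (u * y)
             - k1 * x * d / (u * (y * y * y))))
        = y * y * y * a - k * x * c * y + y * y * b - k1 * x * d"
  using assms by (simp add: field_simps)

lemma pow_deriv_alg:
  fixes y a b c d x :: complex
  assumes y0: "y \<noteq> 0"
  shows "y ^ (k + 3) * ((a / y ^ k - of_nat k * x * c / y ^ (k + 2)) + (b / y ^ (k + 1)
             - of_nat (k + 1) * x * d / y ^ (k + 1 + 2)))
        = y ^ 3 * a - of_nat k * x * c * y + y^2 * b - of_nat (k + 1) * x * d"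
proof -
  have e: "y ^ (k + 3) = y^k * (y * y * y)" "y ^ (k + 2) = y^k * (y * y)" "y ^ (k + 1) = y^k * y"
       "y ^ (k + 1 + 2) = y^k * (y * y * y)" "y ^ 3 = y * y * y" "y ^ 2 = y * y"
    by (simp_all add: power_add power2_eq_square power3_eq_cube)
  have "y^k \<noteq> 0" using y0 by simp
  then show ?thesis unfolding e by (rule pow_deriv_alg0[OF y0])
qed


definition pF :: "real \<Rightarrow> complex poly" where "pF T = [:4 * complex_of_real T:]"
definition pY2 :: "real \<Rightarrow> complex poly" where "pY2 T = pX * pX - pF T"

lemma poly_pY2: "poly (pY2 T) x = x^2 - 4 * complex_of_real T"
  by (simp add: pY2_def pF_def power2_eq_square)

lemma poly_pY2_y: "T > 0 \<Longrightarrow> x \<notin> cut T \<Longrightarrow> poly (pY2 T) x = ycut T x ^ 2"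
  using ycut_sq[OF notin_cut_nz] poly_pY2 by metis

lemma deg_pY2: "degree (pY2 T) \<le> 2"
proof -
  have "degree (pX * pX) \<le> 2" using deg_pX_mult[of pX] by (simp add: pX_def)
  moreover have "degree (pF T) \<le> 2" by (simp add: pF_def)
  ultimately show ?thesis unfolding pY2_def by (rule degree_diff_le)
qed

lemma par_pY2: "par 1 (pY2 T)"
  by (simp add: par_def poly_pY2)

lemma degree_mult_le_n: "degree p \<le> a \<Longrightarrow> degree q \<le> b \<Longrightarrow> a + b \<le> n \<Longrightarrow> degree (p * q) \<le> n"
  using degree_mult_le[of p q] by linarith

lemma degB: "degree (A::complex poly) \<le> n - 1 \<Longrightarrow> degree (pX * A + B) \<le> n - 1 \<Longrightarrow> n \<ge> 1 \<Longrightarrow> degree B \<le> n"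
proof -
  assume a: "degree A \<le> n - 1" "degree (pX * A + B) \<le> n - 1" "n \<ge> 1"
  have "degree (pX * A) \<le> n" using deg_pX_mult[of A] a by linarith
  moreover have "degree (pX * A + B) \<le> n" using a by linarith
  ultimately have "degree ((pX * A + B) - pX * A) \<le> n" by (intro degree_diff_le)
  then show ?thesis by simp
qed

definition Qp :: "real \<Rightarrow> nat \<Rightarrow> complex poly \<Rightarrow> complex poly \<Rightarrow> bool" where
  "Qp T g A B \<longleftrightarrow> degree A \<le> g - 1 \<and> degree (pX * A + B) \<le> g - 1 \<and>
     par ((-1)^(g-1)) A \<and> par ((-1)^g) B \<and>
     (\<forall>x. x \<notin> cut T \<longrightarrow> w10 T g x = poly A x / ycut T x ^ (3*g-2) + poly B x / ycut T x ^ (3*g-1))"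

lemma w10_0: "w10 T 0 = (\<lambda>z. (z - ycut T z) / 2)"
  by (rule ext) (simp add: w10_def Wc.simps(2))

lemma Q1: assumes T: "T > 0" shows "Qp T 1 [:1/2:] [:0, -1/2:]"
  unfolding Qp_def
proof (intro conjI allI impI)
  show "degree (pX * [:1/2:] + [:0, -1/2:]) \<le> 1 - 1" by (simp add: pX_def)
  show "par ((-1) ^ (1 - 1)) [:1/2:]" by (simp add: par_def)
  show "par ((-1) ^ 1) [:0, -1/2:]" by (simp add: par_def)
  fix x assume x: "x \<notin> cut T"
  have y0: "ycut T x \<noteq> 0" using ycut_nz[OF T x] .
  have "((\<lambda>z. (z - ycut T z) / 2) has_field_derivative (1 - x / ycut T x) / 2) (at x)"
    using DERIV_cdivide[OF DERIV_diff[OF DERIV_ident ycut_deriv[OF T x]], of 2] by simp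
  then have d: "deriv (w10 T 0) x = (1 - x / ycut T x) / 2"
    unfolding w10_0 by (rule DERIV_imp_deriv)
  have "w10 T 1 x = (deriv (w10 T 0) x + 0) / ycut T x"
    using w10_rec[of 1 T x] by simp
  also have "\<dots> = poly [:1/2:] x / ycut T x ^ (3*1-2) + poly [:0, -1/2:] x / ycut T x ^ (3*1-1)"
    unfolding d using y0 by (simp add: field_simps power2_eq_square)
  finally show "w10 T 1 x = poly [:1/2:] x / ycut T x ^ (3*1-2) + poly [:0, -1/2:] x / ycut T x ^ (3*1-1)" .
qed simp

lemma ring_id:
  fixes X F A A' B B' K SA SB :: "'a::comm_ring_1"
  shows "X*((X*X - F)*A' - K*(X*A) + SA) + ((X*X-F)*B' - (K+1)*(X*B) + SB)
       = (X*X-F)*(A + X*A' + B') + F*A - (K+1)*(X*(X*A+B)) + (X*SA+SB)"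
  by (simp add: algebra_simps)

lemma sum_id:
  fixes fA fB :: "nat \<Rightarrow> complex poly"
  shows "pX * (\<Sum>p\<in>S. fA p * fB (g-p) + fB p * fA (g-p)) + (\<Sum>p\<in>S. pY2 T * fA p * fA (g-p) + fB p * fB (g-p))
       = (\<Sum>p\<in>S. (pX * fA p + fB p) * (pX * fA (g-p) + fB (g-p)) - pF T * (fA p * fA (g-p)))"
  unfolding sum_distrib_left sum.distrib[symmetric]
  by (rule sum.cong[OF refl]) (simp add: pY2_def algebra_simps)

lemma pderiv_pX: "pderiv pX = 1"
  by (simp add: pX_def pderiv_pCons)

lemma step_alg:
  fixes fA fB :: "nat \<Rightarrow> complex poly" and A B :: "complex poly" and K :: "complex poly"
  shows "pX * (pY2 T * pderiv A - K * (pX * A) + (\<Sum>p\<in>S. fA p * fB (g-p) + fB p * fA (g-p)))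
       + (pY2 T * pderiv B - (K + 1) * (pX * B) + (\<Sum>p\<in>S. pY2 T * fA p * fA (g-p) + fB p * fB (g-p)))
     = pY2 T * pderiv (pX * A + B) + pF T * A - (K + 1) * (pX * (pX * A + B))
       + (\<Sum>p\<in>S. (pX * fA p + fB p) * (pX * fA (g-p) + fB (g-p)) - pF T * (fA p * fA (g-p)))"
proof -
  have pd: "pderiv (pX * A + B) = A + pX * pderiv A + pderiv B"
    by (simp add: pderiv_add pderiv_mult pderiv_pX)
  show ?thesis
    unfolding pd sum_id[symmetric] pY2_def by (rule ring_id)
qed

lemma step:
  assumes T: "T > 0" and g: "g \<ge> 2" and IH: "\<And>p. p \<in> {1..<g} \<Longrightarrow> Qp T p (fA p) (fB p)"
  defines "A \<equiv> fA (g - 1)" and "B \<equiv> fB (g - 1)" and "k \<equiv> 3 * g - 5"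
  defines "Ag \<equiv> pY2 T * pderiv A - [:of_nat k:] * (pX * A)
                 + (\<Sum>p\<in>{1..<g}. fA p * fB (g-p) + fB p * fA (g-p))"
      and "Bg \<equiv> pY2 T * pderiv B - ([:of_nat k:] + 1) * (pX * B)
                 + (\<Sum>p\<in>{1..<g}. pY2 T * fA p * fA (g-p) + fB p * fB (g-p))"
  shows "Qp T g Ag Bg"
proof -
  have Qg1: "Qp T (g - 1) A B" unfolding A_def B_def using IH[of "g - 1"] g by simp
  have dA: "degree A \<le> g - 2" and dC: "degree (pX * A + B) \<le> g - 2"
    and pA: "par ((-1)^(g-2)) A" and pB: "par ((-1)^(g-1)) B"
  proof -
    have e: "g - 1 - 1 = g - 2" by simp
    have "degree A \<le> g - 1 - 1 \<and> degree (pX * A + B) \<le> g - 1 - 1 \<and> par ((-1)^(g-1-1)) A \<and> par ((-1)^(g-1)) B"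
      using Qg1 unfolding Qp_def by blast
    then show "degree A \<le> g - 2" "degree (pX * A + B) \<le> g - 2" "par ((-1)^(g-2)) A" "par ((-1)^(g-1)) B"
      unfolding e by blast+
  qed
  have dB: "degree B \<le> g - 1" using degB[of A "g - 1" B] dA dC g by simp
  have qp: "q \<in> {1..<g}" if "p \<in> {1..<g}" and "q = g - p" for p q using that by auto
  have dAp: "degree (fA p) \<le> p - 1" and dCp: "degree (pX * fA p + fB p) \<le> p - 1"
    and pAp: "par ((-1)^(p-1)) (fA p)" and pBp: "par ((-1)^p) (fB p)"
    and dBp: "degree (fB p) \<le> p"
    if "p \<in> {1..<g}" for p
  proof -
    have Q: "Qp T p (fA p) (fB p)" using IH that .
    then show "degree (fA p) \<le> p - 1" "degree (pX * fA p + fB p) \<le> p - 1"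
      "par ((-1)^(p-1)) (fA p)" "par ((-1)^p) (fB p)" unfolding Qp_def by auto
    then show "degree (fB p) \<le> p" using degB[of "fA p" p "fB p"] that by auto
  qed
  have degAg: "degree Ag \<le> g - 1"
  proof -
    have h1: "degree (pY2 T * pderiv A) \<le> g - 1"
      using deg_Y2_pderiv[OF deg_pY2[of T], of A] dA g by linarith
    have h2: "degree ([:of_nat k:] * (pX * A)) \<le> g - 1"
      using deg_pX_mult[of A] dA g by (rule_tac degree_mult_le_n[of _ 0 _ "degree A + 1"]) auto
    have h3: "degree (\<Sum>p\<in>{1..<g}. fA p * fB (g-p) + fB p * fA (g-p)) \<le> g - 1"
    proof (rule degree_sum_le[OF finite_atLeastLessThan])
      fix p assume p: "p \<in> {1..<g}"
      show "degree (fA p * fB (g - p) + fB p * fA (g - p)) \<le> g - 1"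
      proof (rule degree_add_le)
        show "degree (fA p * fB (g - p)) \<le> g - 1"
          using dAp[OF p] dBp[OF qp[OF p refl]] p by (rule_tac degree_mult_le_n[of _ "p-1" _ "g-p"]) auto
        show "degree (fB p * fA (g - p)) \<le> g - 1"
          using dBp[OF p] dAp[OF qp[OF p refl]] p by (rule_tac degree_mult_le_n[of _ "p" _ "g-p-1"]) auto
      qed
    qed
    show ?thesis unfolding Ag_def by (rule degree_add_le[OF degree_diff_le[OF h1 h2] h3])
  qed
  have degCg: "degree (pX * Ag + Bg) \<le> g - 1"
  proof -
    have e: "pX * Ag + Bg = pY2 T * pderiv (pX * A + B) + pF T * A - ([:of_nat k:] + 1) * (pX * (pX * A + B))
       + (\<Sum>p\<in>{1..<g}. (pX * fA p + fB p) * (pX * fA (g-p) + fB (g-p)) - pF T * (fA p * fA (g-p)))"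
      unfolding Ag_def Bg_def by (rule step_alg)
    have h1: "degree (pY2 T * pderiv (pX * A + B)) \<le> g - 1"
      using deg_Y2_pderiv[OF deg_pY2[of T], of "pX * A + B"] dC g by linarith
    have h2: "degree (pF T * A) \<le> g - 1"
      using dA g by (rule_tac degree_mult_le_n[of _ 0 _ "g - 2"]) (auto simp: pF_def)
    have h3: "degree (([:of_nat k:] + 1) * (pX * (pX * A + B))) \<le> g - 1"
      using deg_pX_mult[of "pX * A + B"] dC g
      by (rule_tac degree_mult_le_n[of _ 0 _ "g - 1"]) (auto simp: one_pCons)
    have h4: "degree (\<Sum>p\<in>{1..<g}. (pX * fA p + fB p) * (pX * fA (g-p) + fB (g-p)) - pF T * (fA p * fA (g-p))) \<le> g - 1"
    proof (rule degree_sum_le[OF finite_atLeastLessThan])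
      fix p assume p: "p \<in> {1..<g}"
      show "degree ((pX * fA p + fB p) * (pX * fA (g-p) + fB (g-p)) - pF T * (fA p * fA (g-p))) \<le> g - 1"
      proof (rule degree_diff_le)
        show "degree ((pX * fA p + fB p) * (pX * fA (g-p) + fB (g-p))) \<le> g - 1"
          using dCp[OF p] dCp[OF qp[OF p refl]] p by (rule_tac degree_mult_le_n[of _ "p-1" _ "g-p-1"]) auto
        have "degree (fA p * fA (g-p)) \<le> g - 1"
          using dAp[OF p] dAp[OF qp[OF p refl]] p by (rule_tac degree_mult_le_n[of _ "p-1" _ "g-p-1"]) auto
        then show "degree (pF T * (fA p * fA (g-p))) \<le> g - 1"
          by (rule_tac degree_mult_le_n[of _ 0 _ "g - 1"]) (auto simp: pF_def)
      qed
    qed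
    show ?thesis unfolding e by (rule degree_add_le[OF degree_diff_le[OF degree_add_le[OF h1 h2] h3] h4])
  qed
  have parAg: "par ((-1)^(g-1)) Ag"
  proof -
    have gg: "g - 1 = Suc (g - 2)" using g by simp
    have h1: "par ((-1)^(g-1)) (pY2 T * pderiv A)"
      using par_mult[OF par_pY2 par_pderiv[OF pA]] by (rule par_cong) (subst gg, simp)
    have h2: "par ((-1)^(g-1)) ([:of_nat k:] * (pX * A))"
      using par_mult[OF par_const par_mult[OF par_pX pA]] by (rule par_cong) (subst gg, simp)
    have h3: "par ((-1)^(g-1)) (\<Sum>p\<in>{1..<g}. fA p * fB (g-p) + fB p * fA (g-p))"
    proof (rule par_sum)
      fix p assume p: "p \<in> {1..<g}"
      have e1: "(p - 1) + (g - p) = g - 1" "p + (g - p - 1) = g - 1" using p by auto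
      show "par ((-1)^(g-1)) (fA p * fB (g - p) + fB p * fA (g - p))"
      proof (rule par_add)
        show "par ((-1)^(g-1)) (fA p * fB (g - p))"
          using par_mult[OF pAp[OF p] pBp[OF qp[OF p refl]]]
          by (rule par_cong) (simp only: power_add[symmetric] e1)
        show "par ((-1)^(g-1)) (fB p * fA (g - p))"
          using par_mult[OF pBp[OF p] pAp[OF qp[OF p refl]]]
          by (rule par_cong) (simp only: power_add[symmetric] e1)
      qed
    qed
    show ?thesis unfolding Ag_def by (rule par_add[OF par_diff[OF h1 h2] h3])
  qed
  have parBg: "par ((-1)^g) Bg"
  proof -
    have gs: "g = Suc (g - 1)" using g by simp
    have h1: "par ((-1)^g) (pY2 T * pderiv B)"
      using par_mult[OF par_pY2 par_pderiv[OF pB]] by (rule par_cong) (subst gs, simp)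
    have c1: "[:of_nat k:] + 1 = [:of_nat k + 1:]" by (simp add: one_pCons)
    have h2: "par ((-1)^g) ([:of_nat k + 1:] * (pX * B))"
      using par_mult[OF par_const par_mult[OF par_pX pB]]
      by (rule par_cong) (subst gs, simp)
    have h3: "par ((-1)^g) (\<Sum>p\<in>{1..<g}. pY2 T * fA p * fA (g-p) + fB p * fB (g-p))"
    proof (rule par_sum)
      fix p assume p: "p \<in> {1..<g}"
      have e1: "(p - 1) + (g - p - 1) + 2 = g" "p + (g - p) = g" using p by auto
      show "par ((-1)^g) (pY2 T * fA p * fA (g - p) + fB p * fB (g - p))"
      proof (rule par_add)
        show "par ((-1)^g) (pY2 T * fA p * fA (g - p))"
          using par_mult[OF par_mult[OF par_pY2 pAp[OF p]] pAp[OF qp[OF p refl]]]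
        proof (rule par_cong)
          have "(-1::complex)^g = (-1)^((p - 1) + (g - p - 1) + 2)" by (simp only: e1)
          then show "1 * (-1) ^ (p - 1) * (-1) ^ (g - p - 1) = (-1::complex) ^ g"
            by (simp add: power_add)
        qed
        show "par ((-1)^g) (fB p * fB (g - p))"
          using par_mult[OF pBp[OF p] pBp[OF qp[OF p refl]]]
          by (rule par_cong) (simp only: power_add[symmetric] e1)
      qed
    qed
    show ?thesis unfolding Bg_def c1 using par_add[OF par_diff[OF h1 h2] h3] .
  qed
  have formula: "w10 T g x = poly Ag x / ycut T x ^ (3*g-2) + poly Bg x / ycut T x ^ (3*g-1)"
    if x: "x \<notin> cut T" for x
  proof -
    let ?y = "ycut T x"
    have y0: "?y \<noteq> 0" using ycut_nz[OF T x] .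
    have y2: "poly (pY2 T) x = ?y ^ 2" using poly_pY2_y[OF T x] .
    have ek: "3 * (g - 1) - 2 = k" "3 * (g - 1) - 1 = k + 1" "3 * g - 2 = k + 3" using g unfolding k_def by auto
    have wg1: "w10 T (g - 1) z = poly A z / ycut T z ^ k + poly B z / ycut T z ^ (k + 1)"
      if "z \<in> - cut T" for z
      using Qg1 that unfolding Qp_def ek by auto
    define Dv where "Dv = (poly (pderiv A) x / ?y ^ k - of_nat k * x * poly A x / ?y ^ (k + 2))
       + (poly (pderiv B) x / ?y ^ (k + 1) - of_nat (k + 1) * x * poly B x / ?y ^ (k + 1 + 2))"
    have "((\<lambda>z. poly A z / ycut T z ^ k + poly B z / ycut T z ^ (k + 1)) has_field_derivative Dv) (at x)"
      unfolding Dv_def by (rule DERIV_add[OF deriv_quot_pow[OF T x] deriv_quot_pow[OF T x]])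
    then have "(w10 T (g - 1) has_field_derivative Dv) (at x)"
      by (rule has_field_derivative_transform_within_open[where S = "- cut T"])
         (use x closed_cut wg1 in \<open>auto simp: open_Compl\<close>)
    then have dv: "deriv (w10 T (g - 1)) x = Dv" by (rule DERIV_imp_deriv)
    define a where "a p = poly (fA p) x" for p
    define b where "b p = poly (fB p) x" for p
    have wp: "w10 T p x = a p / ?y ^ (3*p-2) + b p / ?y ^ (3*p-2+1)" if "p \<in> {1..<g}" for p
    proof -
      have "3*p-1 = 3*p-2+1" using that by auto
      then show ?thesis using IH[OF that] x unfolding Qp_def a_def b_def by auto
    qed
    define S where "S = (\<Sum>p\<in>{1..<g}. w10 T p x * w10 T (g - p) x)"
    have wg: "w10 T g x = (Dv + S) / ?y"
      using w10_rec[of g T x] g unfolding dv S_def by simp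
    have yS: "?y ^ (3*g-2) * S = (\<Sum>p\<in>{1..<g}. a p * a (g-p) * ?y^2 + (a p * b (g-p) + b p * a (g-p)) * ?y + b p * b (g-p))"
      unfolding S_def sum_distrib_left
    proof (rule sum.cong[OF refl])
      fix p assume p: "p \<in> {1..<g}"
      have e: "3*g-2 = (3*p-2) + (3*(g-p)-2) + 2" using p by auto
      show "?y ^ (3*g-2) * (w10 T p x * w10 T (g - p) x) =
          a p * a (g-p) * ?y^2 + (a p * b (g-p) + b p * a (g-p)) * ?y + b p * b (g-p)"
        unfolding wp[OF p] wp[OF qp[OF p refl]] e by (rule pow_prod_alg[OF y0])
    qed
    have yD: "?y ^ (3*g-2) * Dv = ?y ^ 3 * poly (pderiv A) x - of_nat k * x * poly A x * ?y
         + ?y^2 * poly (pderiv B) x - of_nat (k + 1) * x * poly B x"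
      unfolding Dv_def ek by (rule pow_deriv_alg[OF y0])
    have pAg: "poly Ag x = ?y^2 * poly (pderiv A) x - of_nat k * (x * poly A x)
        + (\<Sum>p\<in>{1..<g}. a p * b (g-p) + b p * a (g-p))"
      unfolding Ag_def a_def b_def by (simp add: poly_sum y2)
    have pBg: "poly Bg x = ?y^2 * poly (pderiv B) x - (of_nat k + 1) * (x * poly B x)
        + (\<Sum>p\<in>{1..<g}. ?y^2 * a p * a (g-p) + b p * b (g-p))"
      unfolding Bg_def a_def b_def by (simp add: poly_sum y2)
    have sumc: "(\<Sum>p\<in>{1..<g}. a p * a (g-p) * ?y^2 + (a p * b (g-p) + b p * a (g-p)) * ?y + b p * b (g-p))
       = (\<Sum>p\<in>{1..<g}. a p * b (g-p) + b p * a (g-p)) * ?y + (\<Sum>p\<in>{1..<g}. ?y^2 * a p * a (g-p) + b p * b (g-p))"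
      unfolding sum_distrib_right sum.distrib[symmetric]
      by (rule sum.cong[OF refl]) (simp add: algebra_simps)
    have main: "?y ^ (3*g-2) * (Dv + S) = poly Ag x * ?y + poly Bg x"
      unfolding distrib_left yS yD sumc pAg pBg
      by (simp add: algebra_simps power2_eq_square power3_eq_cube)
    have u0: "?y ^ (3*g-2) \<noteq> 0" using y0 by simp
    have e33: "3*g-1 = Suc (3*g-2)" using g by arith
    have e3: "?y ^ (3*g-1) = ?y ^ (3*g-2) * ?y" unfolding e33 by (rule power_Suc2)
    show ?thesis unfolding wg e3 using main u0 y0
      by (simp add: field_simps)
  qed
  show ?thesis unfolding Qp_def using degAg degCg parAg parBg formula by blast
qed

lemma mainQ: assumes T: "T > 0" shows "g \<ge> 1 \<Longrightarrow> \<exists>A B. Qp T g A B"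
proof (induction g rule: less_induct)
  case (less g)
  show ?case
  proof (cases "g = 1")
    case True then show ?thesis using Q1[OF T] by blast
  next
    case False
    then have g2: "g \<ge> 2" using less.prems by simp
    have "\<forall>p\<in>{1..<g}. \<exists>AB. Qp T p (fst AB) (snd AB)" using less.IH by fastforce
    then obtain f where f: "\<forall>p\<in>{1..<g}. Qp T p (fst (f p)) (snd (f p))" by (metis bchoice)
    show ?thesis using step[OF T g2, of "\<lambda>p. fst (f p)" "\<lambda>p. snd (f p)"] f by blast
  qed
qed

theorem theorem1:
  fixes T :: real and g :: nat
  assumes "T > 0" and "g \<ge> 1"
  shows "\<exists>A B :: complex poly.
           degree A \<le> g - 1 \<and> degree B \<le> g \<and>
           (\<forall>x. poly A (- x) = (-1) ^ (g - 1) * poly A x) \<and>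
           (\<forall>x. poly B (- x) = (-1) ^ g * poly B x) \<and>
           coeff A (g - 1) = - coeff B g \<and>
           (\<forall>x. x \<notin> cut T \<longrightarrow>
              w10 T g x = poly A x / ycut T x ^ (3 * g - 2) + poly B x / ycut T x ^ (3 * g - 1))"
proof -
  obtain A B where Q: "Qp T g A B" using mainQ[OF assms(1) assms(2)] by blast
  have dA: "degree A \<le> g - 1" and dC: "degree (pX * A + B) \<le> g - 1"
    and pA: "par ((-1)^(g-1)) A" and pB: "par ((-1)^g) B"
    and fo: "\<forall>x. x \<notin> cut T \<longrightarrow> w10 T g x = poly A x / ycut T x ^ (3*g-2) + poly B x / ycut T x ^ (3*g-1)"
    using Q unfolding Qp_def by auto
  have dB: "degree B \<le> g" using degB[OF dA dC assms(2)] .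
  have "coeff (pX * A + B) g = 0" using dC assms(2) by (intro coeff_eq_0) linarith
  moreover have "coeff (pX * A) g = coeff A (g - 1)"
  proof -
    have "g = Suc (g - 1)" using assms(2) by simp
    then show ?thesis unfolding pX_mult by (metis coeff_pCons_Suc)
  qed
  ultimately have co: "coeff A (g - 1) = - coeff B g" by (simp add: eq_neg_iff_add_eq_0)
  show ?thesis using dA dB pA pB co fo unfolding par_def by blast
qed

end
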